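(* Let $X$ be a countable set, let $S=(S_1,\dots,S_m)$ be any random variable on $X^m$, and let $n,k_{\max}$ be nonnegative integers with $n\ge1$ and $n+k_{\max}\le m$. Then there exists an integer $k$ with $0\le k\le k_{\max}$ such that $$\mathbb E_{A,B}\big[\mathrm{Cor}(S_A\mid S_B)\big]\le\frac{n(n-1)}{2(k_{\max}+1)}\cdot\mathbb E_{i,B'}\big[I(S_i;S_{B'})\big],$$ where on the left $A$ is a uniformly random $n$-element subset of $[m]$ and $B$ is a uniformly random $k$-element subset of $[m]\setminus A$, and on the right $i$ is uniform on $[m]$ and $B'$ is a uniformly random $(n+k_{\max}-1)$-element subset of $[m]\setminus\{i\}$.
   Context: For $A\subseteq[m]$, $S_A$ denotes the tuple $(S_a)_{a\in A}$. The multivariate total correlation of random variables $x_1,\dots,x_n$ with joint law $\mathcal P$ and marginals $\mathcal P_1,\dots,\mathcal P_n$ is $\mathrm{Cor}(x_1,\dots,x_n)=\mathrm{KL}(\mathcal P\,\|\,\mathcal P_1\times\dots\times\mathcal P_n)$. For a further random variable $y$, $\mathrm{Cor}(x_1,\dots,x_n\mid y)=\mathbb E_{y}[\mathrm{Cor}(x_1|y,\dots,x_n|y)]$, i.e. the expectation over $y$ of the total correlation of the conditional joint law given $y$. $\mathrm{Cor}(S_A\mid S_B)$ means the conditional total correlation of the coordinates $(S_a)_{a\in A}$ given $S_B$. $I(\cdot;\cdot)$ is mutual information (in nats). *)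

theory Defs
  imports "HOL-Probability.Probability"
begin

text \<open>Pointwise KL integrand for probability mass functions, written so that every
  term is nonnegative: p ln(p/q) - p + q, with 0 ln 0 = 0 and p ln(p/0) = infinity.
  Since both laws have total mass 1, summing these terms gives exactly the
  KL divergence sum p ln(p/q), with value in [0, infinity].\<close>
definition kl_term :: "real \<Rightarrow> real \<Rightarrow> ennreal" where
  "kl_term p q = (if p = 0 then ennreal q else if q = 0 then \<infinity>
                  else ennreal (p * ln (p / q) - p + q))"

definition KL_pmf :: "'a pmf \<Rightarrow> 'a pmf \<Rightarrow> ennreal" where
  "KL_pmf P Q = (\<integral>\<^sup>+ x. kl_term (pmf P x) (pmf Q x) \<partial>count_space UNIV)"

definition proj :: "nat set \<Rightarrow> (nat \<Rightarrow> 'x) \<Rightarrow> (nat \<Rightarrow> 'x)" where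
  "proj A s = (\<lambda>a. if a \<in> A then s a else undefined)"

definition total_cor :: "(nat \<Rightarrow> 'x) pmf \<Rightarrow> nat set \<Rightarrow> ennreal" where
  "total_cor P A = KL_pmf (map_pmf (proj A) P)
                          (Pi_pmf A undefined (\<lambda>a. map_pmf (\<lambda>s. s a) P))"

definition cond_total_cor :: "(nat \<Rightarrow> 'x) pmf \<Rightarrow> nat set \<Rightarrow> nat set \<Rightarrow> ennreal" where
  "cond_total_cor P A B =
     (\<integral>\<^sup>+ y. total_cor (cond_pmf P {s. proj B s = y}) A \<partial>measure_pmf (map_pmf (proj B) P))"

definition mutual_info_pmf :: "'s pmf \<Rightarrow> ('s \<Rightarrow> 'a) \<Rightarrow> ('s \<Rightarrow> 'b) \<Rightarrow> ennreal" where
  "mutual_info_pmf P f g = KL_pmf (map_pmf (\<lambda>s. (f s, g s)) P)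
                                  (pair_pmf (map_pmf f P) (map_pmf g P))"

definition avg :: "'a set \<Rightarrow> ('a \<Rightarrow> ennreal) \<Rightarrow> ennreal" where
  "avg F f = (\<Sum>x\<in>F. f x) / of_nat (card F)"

end

theory Submission
  imports Defs
begin

lemma kl_pt_ge:
  fixes a c b d :: real
  assumes a: "a > 0" and c: "c > 0" and ac: "c \<le> a" and b: "b \<ge> 0" and d: "d \<ge> 0"
  shows "kl_term (a*b) (c*d) + ennreal (a*d) = ennreal a * kl_term b d + ennreal (a*b*ln(a/c)) + ennreal (c*d)"
proof -
  have l: "ln (a/c) \<ge> 0" using a c ac by simp
  consider "b = 0" | "b > 0" "d = 0" | "b > 0" "d > 0" using b d by linarith
  then show ?thesis
  proof cases
    case 1 then show ?thesis using a c d by (simp add: kl_term_def ennreal_mult[symmetric] add.commute)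
  next
    case 2 then show ?thesis using a c by (simp add: kl_term_def ennreal_mult_top)
  next
    case 3
    have e1: "ln (a*b/(c*d)) = ln (a/c) + ln (b/d)" using a c 3
      by (simp add: ln_div ln_mult)
    have pos1: "a*b*ln (a*b/(c*d)) - a*b + c*d \<ge> 0"
    proof -
      have "ln (c*d/(a*b)) \<le> c*d/(a*b) - 1" using a c 3 by (intro ln_le_minus_one) auto
      moreover have "ln (c*d/(a*b)) = - ln (a*b/(c*d))" using a c 3 by (simp add: ln_div)
      ultimately have "- ln (a*b/(c*d)) \<le> c*d/(a*b) - 1" by simp
      hence "a*b*(- ln (a*b/(c*d))) \<le> a*b*(c*d/(a*b) - 1)" using a 3 by (intro mult_left_mono) auto
      thus ?thesis using a 3 by (simp add: algebra_simps)
    qed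
    have pos2: "b*ln (b/d) - b + d \<ge> 0"
    proof -
      have "ln (d/b) \<le> d/b - 1" using 3 by (intro ln_le_minus_one) auto
      moreover have "ln (d/b) = - ln (b/d)" using 3 by (simp add: ln_div)
      ultimately have "- ln (b/d) \<le> d/b - 1" by simp
      hence "b*(- ln (b/d)) \<le> b*(d/b - 1)" using 3 by (intro mult_left_mono) auto
      thus ?thesis using 3 by (simp add: algebra_simps)
    qed
    have "kl_term (a*b) (c*d) + ennreal (a*d) = ennreal (a*b*ln (a*b/(c*d)) - a*b + c*d + a*d)"
      using a c 3 pos1 by (simp add: kl_term_def)
    also have "a*b*ln (a*b/(c*d)) - a*b + c*d + a*d = a*(b*ln (b/d) - b + d) + a*b*ln(a/c) + c*d"
      by (simp add: e1 algebra_simps)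
    also have "ennreal \<dots> = ennreal a * kl_term b d + ennreal (a*b*ln(a/c)) + ennreal (c*d)"
      using a c 3 pos2 l by (simp add: kl_term_def ennreal_mult)
    finally show ?thesis .
  qed
qed

lemma kl_pt_lt:
  fixes a c b d :: real
  assumes a: "a > 0" and c: "c > 0" and ac: "a < c" and b: "b \<ge> 0" and d: "d \<ge> 0"
  shows "kl_term (a*b) (c*d) + ennreal (a*b*ln(c/a)) = ennreal a * kl_term b d + ennreal ((c-a)*d)"
proof -
  have l: "ln (c/a) \<ge> 0" using a c ac by simp
  consider "b = 0" | "b > 0" "d = 0" | "b > 0" "d > 0" using b d by linarith
  then show ?thesis
  proof cases
    case 1
    have "c*d - a*d \<ge> 0" using ac d by (simp add: mult_right_mono)
    hence "ennreal (c*d) = ennreal (a*d) + ennreal (c*d - a*d)" using a d by (simp flip: ennreal_plus)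
    then show ?thesis using 1 a c d by (simp add: kl_term_def ennreal_mult[symmetric] algebra_simps)
  next
    case 2 then show ?thesis using a c by (simp add: kl_term_def ennreal_mult_top)
  next
    case 3
    have e1: "ln (a*b/(c*d)) = - ln (c/a) + ln (b/d)" using a c 3
      by (simp add: ln_div ln_mult)
    have pos1: "a*b*ln (a*b/(c*d)) - a*b + c*d \<ge> 0"
    proof -
      have "ln (c*d/(a*b)) \<le> c*d/(a*b) - 1" using a c 3 by (intro ln_le_minus_one) auto
      moreover have "ln (c*d/(a*b)) = - ln (a*b/(c*d))" using a c 3 by (simp add: ln_div)
      ultimately have "- ln (a*b/(c*d)) \<le> c*d/(a*b) - 1" by simp
      hence "a*b*(- ln (a*b/(c*d))) \<le> a*b*(c*d/(a*b) - 1)" using a 3 by (intro mult_left_mono) auto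
      thus ?thesis using a 3 by (simp add: algebra_simps)
    qed
    have pos2: "b*ln (b/d) - b + d \<ge> 0"
    proof -
      have "ln (d/b) \<le> d/b - 1" using 3 by (intro ln_le_minus_one) auto
      moreover have "ln (d/b) = - ln (b/d)" using 3 by (simp add: ln_div)
      ultimately have "- ln (b/d) \<le> d/b - 1" by simp
      hence "b*(- ln (b/d)) \<le> b*(d/b - 1)" using 3 by (intro mult_left_mono) auto
      thus ?thesis using 3 by (simp add: algebra_simps)
    qed
    have "kl_term (a*b) (c*d) + ennreal (a*b*ln(c/a)) = ennreal (a*b*ln (a*b/(c*d)) - a*b + c*d + a*b*ln(c/a))"
      using a c 3 pos1 l by (simp add: kl_term_def)
    also have "a*b*ln (a*b/(c*d)) - a*b + c*d + a*b*ln(c/a) = a*(b*ln (b/d) - b + d) + (c-a)*d"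
      by (simp add: e1 algebra_simps)
    also have "ennreal \<dots> = ennreal a * kl_term b d + ennreal ((c-a)*d)"
      using a c 3 pos2 ac by (simp add: kl_term_def ennreal_mult)
    finally show ?thesis .
  qed
qed

lemma nn_integral_count_ge_point:
  "(f y :: ennreal) \<le> (\<integral>\<^sup>+x. f x \<partial>count_space UNIV)"
proof -
  have "(\<integral>\<^sup>+x. f x * indicator {y} x \<partial>count_space UNIV) \<le> (\<integral>\<^sup>+x. f x \<partial>count_space UNIV)"
    by (intro nn_integral_mono) (auto simp: indicator_def)
  moreover have "(\<integral>\<^sup>+x. f x * indicator {y} x \<partial>count_space UNIV) = f y"
    by (simp add: nn_integral_indicator_finite)
  ultimately show ?thesis by simp
qed

lemma kl_sum:
  fixes a c :: real and b d :: "'b \<Rightarrow> real"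
  assumes a: "a \<ge> 0" and c: "c \<ge> 0" and b: "\<And>y. b y \<ge> 0" and d: "\<And>y. d y \<ge> 0"
    and sb: "(\<integral>\<^sup>+y. ennreal (b y) \<partial>count_space UNIV) = 1"
    and sd: "(\<integral>\<^sup>+y. ennreal (d y) \<partial>count_space UNIV) = 1"
  shows "(\<integral>\<^sup>+y. kl_term (a * b y) (c * d y) \<partial>count_space UNIV)
       = kl_term a c + ennreal a * (\<integral>\<^sup>+y. kl_term (b y) (d y) \<partial>count_space UNIV)"
proof -
  let ?L = "\<integral>\<^sup>+y. kl_term (a * b y) (c * d y) \<partial>count_space UNIV"
  let ?K = "\<integral>\<^sup>+y. kl_term (b y) (d y) \<partial>count_space UNIV"
  have sd': "\<And>r. r \<ge> 0 \<Longrightarrow> (\<integral>\<^sup>+y. ennreal (r * d y) \<partial>count_space UNIV) = ennreal r"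
    using sd d by (simp add: ennreal_mult nn_integral_cmult)
  have sb': "\<And>r. r \<ge> 0 \<Longrightarrow> (\<integral>\<^sup>+y. ennreal (r * b y) \<partial>count_space UNIV) = ennreal r"
    using sb b by (simp add: ennreal_mult nn_integral_cmult)
  consider "a = 0" | "a > 0" "c = 0" | "a > 0" "c > 0" "c \<le> a" | "a > 0" "c > 0" "a < c"
    using a c by linarith
  then show ?thesis
  proof cases
    case 1
    then show ?thesis using sd' c by (simp add: kl_term_def)
  next
    case 2
    have "\<exists>y. b y > 0"
    proof (rule ccontr)
      assume "\<not> ?thesis"
      hence "\<And>y. b y = 0" using b by (meson less_eq_real_def not_less)
      thus False using sb by simp
    qed
    then obtain y where y: "b y > 0" by blast
    have "kl_term (a * b y) (c * d y) = \<infinity>" using 2 y by (simp add: kl_term_def)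
    hence "?L = \<infinity>" using nn_integral_count_ge_point[of "\<lambda>y. kl_term (a * b y) (c * d y)" y]
      by (simp add: top_unique)
    then show ?thesis using 2 by (simp add: kl_term_def)
  next
    case 3
    have l: "a * ln (a/c) \<ge> 0" using 3 by simp
    have "?L + ennreal a = (\<integral>\<^sup>+y. kl_term (a * b y) (c * d y) + ennreal (a * d y) \<partial>count_space UNIV)"
      using sd' a by (simp add: nn_integral_add)
    also have "\<dots> = (\<integral>\<^sup>+y. ennreal a * kl_term (b y) (d y) + ennreal ((a*ln(a/c)) * b y) + ennreal (c*d y) \<partial>count_space UNIV)"
      using 3 b d by (intro nn_integral_cong) (simp add: kl_pt_ge mult.commute mult.left_commute)
    also have "\<dots> = ennreal a * ?K + ennreal (a*ln(a/c)) + ennreal c"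
      using sd' sb' c a l by (simp add: nn_integral_add nn_integral_cmult)
    finally have eq: "?L + ennreal a = ennreal a * ?K + ennreal (a*ln(a/c)) + ennreal c" .
    have pos: "a * ln (a / c) - a + c \<ge> 0"
    proof -
      have "ln (c/a) \<le> c/a - 1" using 3 by (intro ln_le_minus_one) auto
      moreover have "ln (c/a) = - ln (a/c)" using 3 by (simp add: ln_div)
      ultimately have "- ln (a/c) \<le> c/a - 1" by simp
      hence "a*(- ln (a/c)) \<le> a*(c/a - 1)" using 3 by (intro mult_left_mono) auto
      thus ?thesis using 3 by (simp add: algebra_simps)
    qed
    have "(kl_term a c + ennreal a * ?K) + ennreal a = ennreal (a * ln (a / c) - a + c + a) + ennreal a * ?K"
      using 3 pos by (simp add: kl_term_def ennreal_plus[symmetric] del: ennreal_plus; (simp add: ac_simps)?)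
    also have "\<dots> = ennreal a * ?K + ennreal (a*ln(a/c)) + ennreal c"
      using l c 3 by (simp add: ac_simps)
    finally have e3: "(kl_term a c + ennreal a * ?K) + ennreal a = ennreal a * ?K + ennreal (a*ln(a/c)) + ennreal c" .
    have "?L + ennreal a = (kl_term a c + ennreal a * ?K) + ennreal a" by (simp only: eq e3)
    then show ?thesis by (simp add: ennreal_add_left_cancel add.commute[of _ "ennreal a"])
  next
    case 4
    have l: "ln (c/a) \<ge> 0" using 4 by simp
    have "?L + ennreal (a*ln(c/a)) = (\<integral>\<^sup>+y. kl_term (a * b y) (c * d y) + ennreal ((a*ln(c/a)) * b y) \<partial>count_space UNIV)"
      using sb' a l by (simp add: nn_integral_add)
    also have "\<dots> = (\<integral>\<^sup>+y. ennreal a * kl_term (b y) (d y) + ennreal ((c-a)*d y) \<partial>count_space UNIV)"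
    proof (intro nn_integral_cong)
      fix y
      have "kl_term (a * b y) (c * d y) + ennreal (a * b y * ln (c / a)) = ennreal a * kl_term (b y) (d y) + ennreal ((c - a) * d y)"
        using 4 b d by (intro kl_pt_lt) auto
      moreover have "a * ln (c / a) * b y = a * b y * ln (c / a)" by simp
      ultimately show "kl_term (a * b y) (c * d y) + ennreal (a * ln (c / a) * b y) = ennreal a * kl_term (b y) (d y) + ennreal ((c - a) * d y)"
        by (simp only:)
    qed
    also have "\<dots> = ennreal a * ?K + ennreal (c - a)"
      using sd' 4 by (simp add: nn_integral_add nn_integral_cmult)
    finally have eq: "?L + ennreal (a*ln(c/a)) = ennreal a * ?K + ennreal (c - a)" .
    have pos: "a * ln (a / c) - a + c \<ge> 0"
    proof -
      have "ln (c/a) \<le> c/a - 1" using 4 by (intro ln_le_minus_one) auto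
      moreover have "ln (c/a) = - ln (a/c)" using 4 by (simp add: ln_div)
      ultimately have "- ln (a/c) \<le> c/a - 1" by simp
      hence "a*(- ln (a/c)) \<le> a*(c/a - 1)" using 4 by (intro mult_left_mono) auto
      thus ?thesis using 4 by (simp add: algebra_simps)
    qed
    have e2: "ln (c/a) = - ln (a/c)" using 4 by (simp add: ln_div)
    have "(kl_term a c + ennreal a * ?K) + ennreal (a*ln(c/a)) = ennreal (a * ln (a / c) - a + c + a*ln(c/a)) + ennreal a * ?K"
      using 4 pos l by (simp add: kl_term_def ennreal_plus[symmetric] del: ennreal_plus; (simp add: ac_simps)?)
    also have "a * ln (a / c) - a + c + a*ln(c/a) = c - a" by (simp add: e2)
    finally have e3: "(kl_term a c + ennreal a * ?K) + ennreal (a*ln(c/a)) = ennreal (c - a) + ennreal a * ?K" .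
    have "?L + ennreal (a*ln(c/a)) = (kl_term a c + ennreal a * ?K) + ennreal (a*ln(c/a))"
      unfolding eq e3 by (rule add.commute)
    then have "ennreal (a*ln(c/a)) + ?L = ennreal (a*ln(c/a)) + (kl_term a c + ennreal a * ?K)" by (simp only: add.commute)
    then show ?thesis unfolding ennreal_add_left_cancel by simp
  qed
qed


lemma sum_pmf_1: "(\<integral>\<^sup>+y. ennreal (pmf p y) \<partial>count_space UNIV) = 1"
  using nn_integral_pmf[where p=p and A=UNIV] by (simp add: measure_pmf.emeasure_space_1[simplified])

lemma measure_cond_pmf':
  assumes "set_pmf p \<inter> s \<noteq> {}"
  shows "measure (measure_pmf (cond_pmf p s)) A = measure p (s \<inter> A) / measure p s"
  using assms by (simp add: cond_pmf.rep_eq emeasure_measure_pmf_not_zero)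

definition kern :: "('a \<times> 'b) pmf \<Rightarrow> 'a \<Rightarrow> 'b pmf" where
  "kern P x = map_pmf snd (cond_pmf P {z. fst z = x})"

lemma pmf_kern:
  assumes "x \<in> set_pmf (map_pmf fst P)"
  shows "pmf (kern P x) y = pmf P (x,y) / pmf (map_pmf fst P) x"
proof -
  have ne: "set_pmf P \<inter> {z. fst z = x} \<noteq> {}" using assms by auto
  have "pmf (kern P x) y = measure (cond_pmf P {z. fst z = x}) (snd -` {y})"
    by (simp add: kern_def pmf_map)
  also have "\<dots> = measure P (snd -` {y} \<inter> {z. fst z = x}) / measure P {z. fst z = x}"
    using ne by (simp add: measure_cond_pmf' Int_commute)
  also have "snd -` {y} \<inter> {z. fst z = x} = {(x,y)}" by auto
  also have "measure P {z. fst z = x} = pmf (map_pmf fst P) x"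
    by (simp add: pmf_map vimage_def)
  finally show ?thesis by (simp add: measure_pmf_single)
qed

lemma pmf_pair_kern: "pmf P (x,y) = pmf (map_pmf fst P) x * pmf (kern P x) y"
proof (cases "x \<in> set_pmf (map_pmf fst P)")
  case True
  hence "pmf (map_pmf fst P) x \<noteq> 0" by (simp add: set_pmf_eq')
  thus ?thesis using True by (simp add: pmf_kern)
next
  case False
  hence "(x,y) \<notin> set_pmf P" by force
  hence "pmf P (x,y) = 0" by (simp add: pmf_eq_0_set_pmf)
  moreover have "pmf (map_pmf fst P) x = 0" using False pmf_eq_0_set_pmf by metis
  ultimately show ?thesis by simp
qed

lemma KL_chain:
  fixes P Q :: "('a \<times> 'b) pmf"
  assumes Q: "\<And>x y. pmf Q (x,y) = pmf Q1 x * pmf (L x) y"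
  shows "KL_pmf P Q = KL_pmf (map_pmf fst P) Q1
           + (\<integral>\<^sup>+x. KL_pmf (kern P x) (L x) \<partial>measure_pmf (map_pmf fst P))"
proof -
  have "KL_pmf P Q = (\<integral>\<^sup>+x. \<integral>\<^sup>+y. kl_term (pmf P (x,y)) (pmf Q (x,y)) \<partial>count_space UNIV \<partial>count_space UNIV)"
    unfolding KL_pmf_def
    using nn_integral_fst_count_space[of "\<lambda>z. kl_term (pmf P z) (pmf Q z)"] by simp
  also have "\<dots> = (\<integral>\<^sup>+x. \<integral>\<^sup>+y. kl_term (pmf (map_pmf fst P) x * pmf (kern P x) y) (pmf Q1 x * pmf (L x) y) \<partial>count_space UNIV \<partial>count_space UNIV)"
    by (simp add: Q pmf_pair_kern[of P])
  also have "\<dots> = (\<integral>\<^sup>+x. kl_term (pmf (map_pmf fst P) x) (pmf Q1 x) + ennreal (pmf (map_pmf fst P) x) * KL_pmf (kern P x) (L x) \<partial>count_space UNIV)"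
    unfolding KL_pmf_def by (intro nn_integral_cong kl_sum) (simp_all add: sum_pmf_1)
  also have "\<dots> = KL_pmf (map_pmf fst P) Q1 + (\<integral>\<^sup>+x. KL_pmf (kern P x) (L x) \<partial>measure_pmf (map_pmf fst P))"
    by (simp add: nn_integral_add KL_pmf_def nn_integral_measure_pmf)
  finally show ?thesis .
qed


lemma kl_term_self: "p \<ge> 0 \<Longrightarrow> kl_term p p = 0"
  by (simp add: kl_term_def)

lemma KL_self[simp]: "KL_pmf P P = 0"
  unfolding KL_pmf_def by (simp add: kl_term_self)

lemma pmf_map_inj_S:
  assumes "inj_on \<phi> S" "set_pmf P \<subseteq> S" "x \<in> S"
  shows "pmf (map_pmf \<phi> P) (\<phi> x) = pmf P x"
proof -
  have "pmf (map_pmf \<phi> P) (\<phi> x) = measure P (\<phi> -` {\<phi> x} \<inter> set_pmf P)"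
    by (simp add: pmf_map measure_Int_set_pmf)
  also have "\<phi> -` {\<phi> x} \<inter> set_pmf P = {x} \<inter> set_pmf P"
    using assms by (auto dest: inj_onD)
  also have "measure P \<dots> = pmf P x" by (simp add: measure_Int_set_pmf measure_pmf_single)
  finally show ?thesis .
qed

lemma nn_integral_count_UNIV_restrict:
  assumes "\<And>x. x \<notin> S \<Longrightarrow> f x = 0"
  shows "(\<integral>\<^sup>+x. f x \<partial>count_space UNIV) = (\<integral>\<^sup>+x. f x \<partial>count_space S)"
proof -
  have "(\<integral>\<^sup>+x. f x \<partial>count_space S) = (\<integral>\<^sup>+x. f x * indicator S x \<partial>count_space UNIV)"
    by (rule nn_integral_count_space_indicator) simp
  also have "\<dots> = (\<integral>\<^sup>+x. f x \<partial>count_space UNIV)"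
    using assms by (intro nn_integral_cong) (auto simp: indicator_def)
  finally show ?thesis by simp
qed

lemma KL_inj:
  assumes inj: "inj_on \<phi> (set_pmf P \<union> set_pmf Q)"
  shows "KL_pmf (map_pmf \<phi> P) (map_pmf \<phi> Q) = KL_pmf P Q"
proof -
  let ?S = "set_pmf P \<union> set_pmf Q"
  have "KL_pmf (map_pmf \<phi> P) (map_pmf \<phi> Q) = (\<integral>\<^sup>+z. kl_term (pmf (map_pmf \<phi> P) z) (pmf (map_pmf \<phi> Q) z) \<partial>count_space (\<phi> ` ?S))"
    unfolding KL_pmf_def
  proof (rule nn_integral_count_UNIV_restrict)
    fix z assume "z \<notin> \<phi> ` ?S"
    hence "z \<notin> set_pmf (map_pmf \<phi> P)" "z \<notin> set_pmf (map_pmf \<phi> Q)" by auto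
    thus "kl_term (pmf (map_pmf \<phi> P) z) (pmf (map_pmf \<phi> Q) z) = 0"
      by (simp add: pmf_eq_0_set_pmf[symmetric] kl_term_def del: set_map_pmf)
  qed
  also have "\<dots> = (\<integral>\<^sup>+x. kl_term (pmf (map_pmf \<phi> P) (\<phi> x)) (pmf (map_pmf \<phi> Q) (\<phi> x)) \<partial>count_space ?S)"
    using inj by (intro nn_integral_bij_count_space[symmetric]) (simp add: bij_betw_def)
  also have "\<dots> = (\<integral>\<^sup>+x. kl_term (pmf P x) (pmf Q x) \<partial>count_space ?S)"
    using inj by (intro nn_integral_cong) (simp add: pmf_map_inj_S[of \<phi> ?S])
  also have "\<dots> = KL_pmf P Q"
    unfolding KL_pmf_def
  proof (rule nn_integral_count_UNIV_restrict[symmetric])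
    fix z assume "z \<notin> ?S"
    thus "kl_term (pmf P z) (pmf Q z) = 0"
      by (simp add: pmf_eq_0_set_pmf[symmetric] kl_term_def)
  qed
  finally show ?thesis .
qed

lemma kern_map:
  assumes "y \<in> set_pmf (map_pmf h P)"
  shows "kern (map_pmf (\<lambda>s. (h s, X s)) P) y = map_pmf X (cond_pmf P {s. h s = y})"
proof (rule pmf_eqI)
  fix w
  have ne: "set_pmf P \<inter> {s. h s = y} \<noteq> {}" using assms by auto
  have mf: "map_pmf fst (map_pmf (\<lambda>s. (h s, X s)) P) = map_pmf h P" by (simp add: map_pmf_comp)
  have "pmf (kern (map_pmf (\<lambda>s. (h s, X s)) P) y) w = pmf (map_pmf (\<lambda>s. (h s, X s)) P) (y, w) / pmf (map_pmf h P) y"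
    using assms by (simp add: pmf_kern mf)
  also have "\<dots> = measure P {s. h s = y \<and> X s = w} / measure P {s. h s = y}"
    by (simp add: pmf_map vimage_def)
  also have "\<dots> = pmf (map_pmf X (cond_pmf P {s. h s = y})) w"
    using ne by (simp add: pmf_map measure_cond_pmf' vimage_def Int_def conj_commute)
  finally show "pmf (kern (map_pmf (\<lambda>s. (h s, X s)) P) y) w = pmf (map_pmf X (cond_pmf P {s. h s = y})) w" .
qed

lemma KL_cond_decomp:
  assumes Q: "\<And>v w. pmf Q (v,w) = pmf (map_pmf h P) v * pmf (L v) w"
  shows "KL_pmf (map_pmf (\<lambda>s. (h s, U s)) P) Q
     = (\<integral>\<^sup>+v. KL_pmf (map_pmf U (cond_pmf P {s. h s = v})) (L v) \<partial>measure_pmf (map_pmf h P))"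
proof -
  have mf: "map_pmf fst (map_pmf (\<lambda>s. (h s, U s)) P) = map_pmf h P" by (simp add: map_pmf_comp)
  have "KL_pmf (map_pmf (\<lambda>s. (h s, U s)) P) Q
      = (\<integral>\<^sup>+v. KL_pmf (kern (map_pmf (\<lambda>s. (h s, U s)) P) v) (L v) \<partial>measure_pmf (map_pmf h P))"
    using KL_chain[of Q "map_pmf h P" L "map_pmf (\<lambda>s. (h s, U s)) P", OF Q] by (simp add: mf)
  also have "\<dots> = (\<integral>\<^sup>+v. KL_pmf (map_pmf U (cond_pmf P {s. h s = v})) (L v) \<partial>measure_pmf (map_pmf h P))"
    by (intro nn_integral_cong_AE) (simp add: AE_measure_pmf_iff kern_map del: set_map_pmf)
  finally show ?thesis .
qed

lemma MI_swap:
  "mutual_info_pmf P f g = KL_pmf (map_pmf (\<lambda>s. (g s, f s)) P) (pair_pmf (map_pmf g P) (map_pmf f P))"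
proof -
  have "mutual_info_pmf P f g = KL_pmf (map_pmf (\<lambda>(x,y). (y,x)) (map_pmf (\<lambda>s. (f s, g s)) P))
          (map_pmf (\<lambda>(x,y). (y,x)) (pair_pmf (map_pmf f P) (map_pmf g P)))"
    unfolding mutual_info_pmf_def by (rule KL_inj[symmetric]) (auto simp: inj_on_def)
  also have "map_pmf (\<lambda>(x,y). (y,x)) (pair_pmf (map_pmf f P) (map_pmf g P)) = pair_pmf (map_pmf g P) (map_pmf f P)"
    by (rule pair_commute_pmf[symmetric])
  finally show ?thesis by (simp add: map_pmf_comp)
qed

lemma MI_reparam:
  assumes inj: "inj_on \<phi> (g ` set_pmf P)" and g': "\<And>s. g' s = \<phi> (g s)"
  shows "mutual_info_pmf P f g' = mutual_info_pmf P f g"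
proof -
  let ?m = "\<lambda>(a, b). (id a, \<phi> b)"
  have i: "inj_on ?m (set_pmf (map_pmf (\<lambda>s. (f s, g s)) P) \<union> set_pmf (pair_pmf (map_pmf f P) (map_pmf g P)))"
    using inj by (auto simp: inj_on_def)
  have "mutual_info_pmf P f g = KL_pmf (map_pmf ?m (map_pmf (\<lambda>s. (f s, g s)) P)) (map_pmf ?m (pair_pmf (map_pmf f P) (map_pmf g P)))"
    unfolding mutual_info_pmf_def by (rule KL_inj[OF i, symmetric])
  also have "map_pmf ?m (pair_pmf (map_pmf f P) (map_pmf g P)) = pair_pmf (map_pmf f P) (map_pmf g' P)"
    unfolding map_pair using g' by (simp add: map_pmf_comp o_def) (metis ext)
  also have "map_pmf ?m (map_pmf (\<lambda>s. (f s, g s)) P) = map_pmf (\<lambda>s. (f s, g' s)) P"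
    by (simp add: map_pmf_comp g')
  finally show ?thesis unfolding mutual_info_pmf_def by simp
qed


definition condMI :: "'s pmf \<Rightarrow> ('s \<Rightarrow> 'a) \<Rightarrow> ('s \<Rightarrow> 'b) \<Rightarrow> ('s \<Rightarrow> 'c) \<Rightarrow> ennreal" where
  "condMI P f g h = (\<integral>\<^sup>+v. mutual_info_pmf (cond_pmf P {s. h s = v}) f g \<partial>measure_pmf (map_pmf h P))"

lemma KL_MI_split:
  "KL_pmf (map_pmf (\<lambda>s. (f s, g s)) R) (pair_pmf A (map_pmf g R))
     = KL_pmf (map_pmf f R) A + mutual_info_pmf R f g"
proof -
  let ?P' = "map_pmf (\<lambda>s. (f s, g s)) R"
  have mf: "map_pmf fst ?P' = map_pmf f R" by (simp add: map_pmf_comp)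
  have 1: "KL_pmf ?P' (pair_pmf A (map_pmf g R)) = KL_pmf (map_pmf f R) A
     + (\<integral>\<^sup>+u. KL_pmf (kern ?P' u) (map_pmf g R) \<partial>measure_pmf (map_pmf f R))"
    using KL_chain[of "pair_pmf A (map_pmf g R)" A "\<lambda>_. map_pmf g R" ?P'] by (simp add: pmf_pair mf)
  have 2: "mutual_info_pmf R f g = KL_pmf (map_pmf f R) (map_pmf f R)
     + (\<integral>\<^sup>+u. KL_pmf (kern ?P' u) (map_pmf g R) \<partial>measure_pmf (map_pmf f R))"
    unfolding mutual_info_pmf_def
    using KL_chain[of "pair_pmf (map_pmf f R) (map_pmf g R)" "map_pmf f R" "\<lambda>_. map_pmf g R" ?P'] by (simp add: pmf_pair mf)
  show ?thesis using 1 2 by simp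
qed

lemma MI_chain:
  "mutual_info_pmf P f (\<lambda>s. (h s, g s)) = mutual_info_pmf P f h + condMI P f g h"
proof -
  let ?B = "map_pmf (\<lambda>s. (h s, g s)) P"
  let ?\<sigma> = "\<lambda>(u::'b, (v::'c, w::'d)). (v, (u, w))"
  let ?Q = "map_pmf ?\<sigma> (pair_pmf (map_pmf f P) ?B)"
  let ?L = "\<lambda>v. pair_pmf (map_pmf f P) (kern ?B v)"
  have injs: "inj ?\<sigma>" by (auto simp: inj_def)
  have mB: "map_pmf fst ?B = map_pmf h P" by (simp add: map_pmf_comp)
  have Q: "pmf ?Q (v, w') = pmf (map_pmf h P) v * pmf (?L v) w'" for v w'
  proof -
    obtain u w where w': "w' = (u, w)" by (cases w')
    have "pmf ?Q (v, (u, w)) = pmf ?Q (?\<sigma> (u, (v, w)))" by simp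
    also have "\<dots> = pmf (pair_pmf (map_pmf f P) ?B) (u, (v, w))" by (rule pmf_map_inj'[OF injs])
    also have "\<dots> = pmf (map_pmf h P) v * pmf (?L v) (u, w)"
      by (simp add: pmf_pair pmf_pair_kern[of ?B v w] mB)
    finally show ?thesis using w' by simp
  qed
  have "mutual_info_pmf P f (\<lambda>s. (h s, g s)) = KL_pmf (map_pmf ?\<sigma> (map_pmf (\<lambda>s. (f s, (h s, g s))) P)) ?Q"
    unfolding mutual_info_pmf_def by (rule KL_inj[symmetric]) (use injs in \<open>auto simp: inj_on_def inj_def\<close>)
  also have "map_pmf ?\<sigma> (map_pmf (\<lambda>s. (f s, (h s, g s))) P) = map_pmf (\<lambda>s. (h s, (f s, g s))) P"
    by (simp add: map_pmf_comp)
  also have "KL_pmf \<dots> ?Q = (\<integral>\<^sup>+v. KL_pmf (map_pmf (\<lambda>s. (f s, g s)) (cond_pmf P {s. h s = v})) (?L v) \<partial>measure_pmf (map_pmf h P))"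
    by (rule KL_cond_decomp[OF Q])
  also have "\<dots> = (\<integral>\<^sup>+v. KL_pmf (map_pmf f (cond_pmf P {s. h s = v})) (map_pmf f P)
                   + mutual_info_pmf (cond_pmf P {s. h s = v}) f g \<partial>measure_pmf (map_pmf h P))"
    by (intro nn_integral_cong_AE) (simp add: AE_measure_pmf_iff kern_map KL_MI_split del: set_map_pmf)
  also have "\<dots> = (\<integral>\<^sup>+v. KL_pmf (map_pmf f (cond_pmf P {s. h s = v})) (map_pmf f P) \<partial>measure_pmf (map_pmf h P))
                   + condMI P f g h"
    unfolding condMI_def by (simp add: nn_integral_add)
  also have "(\<integral>\<^sup>+v. KL_pmf (map_pmf f (cond_pmf P {s. h s = v})) (map_pmf f P) \<partial>measure_pmf (map_pmf h P))
      = mutual_info_pmf P f h"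
    unfolding MI_swap[of P f h] by (rule KL_cond_decomp[symmetric]) (simp add: pmf_pair)
  finally show ?thesis .
qed


lemma MI_const: "mutual_info_pmf P f (\<lambda>s. c) = 0"
  unfolding mutual_info_pmf_def by (simp add: pair_return_pmf2 map_pmf_comp)

lemma proj_empty: "proj {} = (\<lambda>s a. undefined)"
  by (simp add: proj_def fun_eq_iff)

lemma total_cor_empty: "total_cor P {} = 0"
  unfolding total_cor_def by (simp add: proj_empty)

lemma total_cor_insert:
  assumes fin: "finite A" and aA: "a \<notin> A"
  shows "total_cor P (insert a A) = total_cor P A + mutual_info_pmf P (\<lambda>s. s a) (proj A)"
proof -
  let ?M = "\<lambda>a. map_pmf (\<lambda>s. s a) P"
  let ?D = "{f. \<forall>x. x \<notin> insert a A \<longrightarrow> f x = undefined}"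
  let ?\<psi> = "\<lambda>f. (proj A f, f a)"
  let ?P' = "map_pmf (\<lambda>s. (proj A s, s a)) P"
  have injD: "inj_on ?\<psi> ?D"
  proof (rule inj_onI)
    fix f g assume f: "f \<in> ?D" and g: "g \<in> ?D" and e: "?\<psi> f = ?\<psi> g"
    show "f = g"
    proof
      fix x show "f x = g x"
        using f g e by (cases "x \<in> insert a A") (auto simp: proj_def fun_eq_iff, metis)
    qed
  qed
  have s1: "set_pmf (map_pmf (proj (insert a A)) P) \<subseteq> ?D" by (auto simp: proj_def)
  have s2: "set_pmf (Pi_pmf (insert a A) undefined ?M) \<subseteq> ?D"
    using set_Pi_pmf_subset[of "insert a A" undefined ?M] fin by auto
  have "total_cor P (insert a A) = KL_pmf (map_pmf ?\<psi> (map_pmf (proj (insert a A)) P)) (map_pmf ?\<psi> (Pi_pmf (insert a A) undefined ?M))"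
    unfolding total_cor_def by (rule KL_inj[symmetric]) (rule inj_on_subset[OF injD], use s1 s2 in auto)
  also have "map_pmf ?\<psi> (map_pmf (proj (insert a A)) P) = ?P'"
  proof -
    have eq: "\<And>s. ?\<psi> (proj (insert a A) s) = (proj A s, s a)" by (auto simp: proj_def fun_eq_iff)
    show ?thesis by (simp add: map_pmf_comp eq)
  qed
  also have "map_pmf ?\<psi> (Pi_pmf (insert a A) undefined ?M) = pair_pmf (Pi_pmf A undefined ?M) (?M a)"
  proof -
    have "map_pmf ?\<psi> (Pi_pmf (insert a A) undefined ?M)
        = map_pmf (\<lambda>z. ?\<psi> ((snd z)(a := fst z))) (pair_pmf (?M a) (Pi_pmf A undefined ?M))"
      using fin aA by (simp add: Pi_pmf_insert map_pmf_comp case_prod_beta)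
    also have "\<dots> = map_pmf (\<lambda>(y, f). (f, y)) (pair_pmf (?M a) (Pi_pmf A undefined ?M))"
    proof (rule map_pmf_cong[OF refl])
      fix z assume z: "z \<in> set_pmf (pair_pmf (?M a) (Pi_pmf A undefined ?M))"
      obtain y f where zz: "z = (y, f)" by (cases z)
      have "f \<in> set_pmf (Pi_pmf A undefined ?M)" using z zz by auto
      hence "\<forall>x. x \<notin> A \<longrightarrow> f x = undefined" using set_Pi_pmf_subset[of A undefined ?M] fin by auto
      hence "proj A (f(a := y)) = f" using aA by (auto simp: proj_def fun_eq_iff)
      thus "(\<lambda>z. ?\<psi> ((snd z)(a := fst z))) z = (\<lambda>(y, f). (f, y)) z" using zz by simp
    qed
    also have "\<dots> = pair_pmf (Pi_pmf A undefined ?M) (?M a)" by (rule pair_commute_pmf[symmetric])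
    finally show ?thesis .
  qed
  also have "KL_pmf ?P' (pair_pmf (Pi_pmf A undefined ?M) (?M a))
     = KL_pmf (map_pmf (proj A) P) (Pi_pmf A undefined ?M) + (\<integral>\<^sup>+v. KL_pmf (kern ?P' v) (?M a) \<partial>measure_pmf (map_pmf (proj A) P))"
    using KL_chain[of "pair_pmf (Pi_pmf A undefined ?M) (?M a)" "Pi_pmf A undefined ?M" "\<lambda>_. ?M a" ?P']
    by (simp add: pmf_pair map_pmf_comp)
  also have "(\<integral>\<^sup>+v. KL_pmf (kern ?P' v) (?M a) \<partial>measure_pmf (map_pmf (proj A) P)) = mutual_info_pmf P (\<lambda>s. s a) (proj A)"
    unfolding MI_swap[of P "\<lambda>s. s a" "proj A"]
    using KL_chain[of "pair_pmf (map_pmf (proj A) P) (?M a)" "map_pmf (proj A) P" "\<lambda>_. ?M a" ?P']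
    by (simp add: pmf_pair map_pmf_comp)
  finally show ?thesis unfolding total_cor_def .
qed

lemma MI_union:
  "mutual_info_pmf P f (proj (B \<union> T)) = mutual_info_pmf P f (proj B) + condMI P f (proj T) (proj B)"
proof -
  have "mutual_info_pmf P f (proj (B \<union> T)) = mutual_info_pmf P f (\<lambda>s. (proj B s, proj T s))"
  proof (rule MI_reparam[where \<phi> = "\<lambda>(u, v) x. if x \<in> B then u x else v x"])
    show "inj_on (\<lambda>(u, v) x. if x \<in> B then u x else v x) ((\<lambda>s. (proj B s, proj T s)) ` set_pmf P)"
    proof (rule inj_onI, clarsimp)
      fix s t assume e: "(\<lambda>x. if x \<in> B then proj B s x else proj T s x) = (\<lambda>x. if x \<in> B then proj B t x else proj T t x)"
      have "\<And>x. x \<in> B \<Longrightarrow> s x = t x" subgoal for x using fun_cong[OF e, of x] by (simp add: proj_def) done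
      moreover have "\<And>x. x \<in> T \<Longrightarrow> x \<notin> B \<Longrightarrow> s x = t x" subgoal for x using fun_cong[OF e, of x] by (simp add: proj_def) done
      ultimately show "proj B s = proj B t \<and> proj T s = proj T t" by (auto simp: proj_def fun_eq_iff)
    qed
  qed (auto simp: proj_def fun_eq_iff)
  also have "\<dots> = mutual_info_pmf P f (proj B) + condMI P f (proj T) (proj B)"
    by (rule MI_chain)
  finally show ?thesis .
qed

lemma cond_total_cor_insert:
  assumes "finite A" "a \<notin> A"
  shows "cond_total_cor P (insert a A) B = cond_total_cor P A B + condMI P (\<lambda>s. s a) (proj A) (proj B)"
  unfolding cond_total_cor_def condMI_def
  using assms by (simp add: total_cor_insert nn_integral_add)

lemma cond_total_cor_empty: "cond_total_cor P {} B = 0"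
  unfolding cond_total_cor_def by (simp add: total_cor_empty)

lemma condMI_empty: "condMI P f (proj {}) h = 0"
  unfolding condMI_def by (simp add: proj_empty MI_const)


lemma avg_add: "avg F (\<lambda>x. f x + g x) = avg F f + avg F g"
  unfolding avg_def by (simp add: sum.distrib add_divide_distrib_ennreal)

lemma avg_const: "finite F \<Longrightarrow> F \<noteq> {} \<Longrightarrow> avg F (\<lambda>_. c) = c"
  unfolding avg_def by (simp add: mult.commute[of _ c] ennreal_mult_divide_eq)

lemma avg_cong: "(\<And>x. x \<in> F \<Longrightarrow> f x = g x) \<Longrightarrow> avg F f = avg F g"
  unfolding avg_def by (simp cong: sum.cong)

lemma avg_zero: "avg F (\<lambda>_. 0) = 0"
  unfolding avg_def by simp

lemma avg_fiber:
  assumes D: "finite D" and fE: "finite E" and gE: "\<And>x. x \<in> D \<Longrightarrow> g x \<in> E"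
    and c: "\<And>e. e \<in> E \<Longrightarrow> card {x\<in>D. g x = e} = c" and c0: "c > 0"
  shows "avg D (\<lambda>x. h (g x)) = avg E h"
proof -
  have "(\<Sum>x\<in>D. h (g x)) = (\<Sum>e\<in>E. \<Sum>x\<in>{x\<in>D. g x = e}. h (g x))"
    using D fE gE by (intro sum.group[symmetric]) auto
  also have "\<dots> = (\<Sum>e\<in>E. of_nat c * h e)"
    using c by (intro sum.cong) auto
  finally have S: "(\<Sum>x\<in>D. h (g x)) = (\<Sum>e\<in>E. h e) * of_nat c" by (simp add: sum_distrib_left mult.commute)
  have "card D = (\<Sum>x\<in>D. 1)" by simp
  also have "\<dots> = (\<Sum>e\<in>E. \<Sum>x\<in>{x\<in>D. g x = e}. 1)"
    using D fE gE by (intro sum.group[symmetric]) auto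
  also have "\<dots> = (\<Sum>e\<in>E. c)" using c by (intro sum.cong) auto
  finally have N: "card D = card E * c" by simp
  show ?thesis unfolding avg_def S N of_nat_mult
    using c0 by (intro divide_mult_eq) auto
qed

lemma avg_Sigma:
  assumes X: "finite X" and Y: "\<And>x. x \<in> X \<Longrightarrow> finite (Y x)" and c: "\<And>x. x \<in> X \<Longrightarrow> card (Y x) = c" and c0: "c > 0"
  shows "avg X (\<lambda>x. avg (Y x) (h x)) = avg (Sigma X Y) (\<lambda>z. h (fst z) (snd z))"
proof -
  have "avg X (\<lambda>x. avg (Y x) (h x)) = (\<Sum>x\<in>X. (\<Sum>y\<in>Y x. h x y) * inverse (of_nat c)) * inverse (of_nat (card X))"
    unfolding avg_def divide_ennreal_def using c by (intro arg_cong2[where f="(*)"] sum.cong) auto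
  also have "\<dots> = (\<Sum>x\<in>X. \<Sum>y\<in>Y x. h x y) * inverse (of_nat c * of_nat (card X))"
    by (simp add: sum_distrib_right ennreal_inverse_mult of_nat_less_top mult.assoc)
  also have "(\<Sum>x\<in>X. \<Sum>y\<in>Y x. h x y) = (\<Sum>z\<in>Sigma X Y. h (fst z) (snd z))"
    using X Y by (simp add: sum.Sigma split_beta)
  also have "of_nat c * of_nat (card X) = (of_nat (card (Sigma X Y)) :: ennreal)"
    using X Y c by (simp add: card_SigmaI mult.commute)
  finally show ?thesis unfolding avg_def divide_ennreal_def .
qed


definition sub :: "nat set \<Rightarrow> nat \<Rightarrow> nat set set" where
  "sub R t = {B. B \<subseteq> R \<and> card B = t}"

lemma sub_finite: "finite R \<Longrightarrow> finite (sub R t)"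
  unfolding sub_def by (rule finite_subset[of _ "Pow R"]) auto

lemma card_sub: "finite R \<Longrightarrow> card (sub R t) = card R choose t"
  unfolding sub_def by (rule n_subsets)

lemma card_sub_pos: "finite R \<Longrightarrow> t \<le> card R \<Longrightarrow> card (sub R t) > 0"
  by (simp add: card_sub)

lemma sub_ne: "finite R \<Longrightarrow> t \<le> card R \<Longrightarrow> sub R t \<noteq> {}"
  using card_sub_pos by fastforce

lemma comb_split:
  assumes R: "finite R" and kj: "k + j \<le> card R"
  shows "avg (sub R (k+j)) h = avg (sub R k) (\<lambda>B. avg (sub (R - B) j) (\<lambda>T. h (B \<union> T)))"
proof -
  let ?D = "Sigma (sub R k) (\<lambda>B. sub (R - B) j)"
  have "avg (sub R k) (\<lambda>B. avg (sub (R - B) j) (\<lambda>T. h (B \<union> T))) = avg ?D (\<lambda>z. h (fst z \<union> snd z))"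
  proof (rule avg_Sigma)
    show "finite (sub R k)" using R by (rule sub_finite)
    fix B assume B: "B \<in> sub R k"
    hence fB: "finite B" "B \<subseteq> R" "card B = k" using R by (auto simp: sub_def intro: finite_subset)
    show "finite (sub (R - B) j)" using R by (intro sub_finite) auto
    show "card (sub (R - B) j) = (card R - k) choose j" using R fB by (simp add: card_sub card_Diff_subset)
  next
    show "(card R - k) choose j > 0" using kj by simp
  qed
  also have "\<dots> = avg (sub R (k+j)) h"
  proof (rule avg_fiber)
    show "finite ?D" using R by (intro finite_SigmaI sub_finite) auto
    show "finite (sub R (k+j))" using R by (rule sub_finite)
    fix z assume z: "z \<in> ?D"
    then obtain B T where zz: "z = (B, T)" and B: "B \<subseteq> R" "card B = k" and T: "T \<subseteq> R - B" "card T = j"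
      by (auto simp: sub_def)
    have "finite B" "finite T" using B T R by (auto intro: finite_subset)
    moreover have "B \<inter> T = {}" using T by auto
    ultimately have "card (B \<union> T) = k + j" using B T by (simp add: card_Un_disjoint)
    thus "fst z \<union> snd z \<in> sub R (k+j)" using zz B T by (auto simp: sub_def)
  next
    fix U assume U: "U \<in> sub R (k+j)"
    hence U': "U \<subseteq> R" "card U = k + j" "finite U" using R by (auto simp: sub_def intro: finite_subset)
    have "{z \<in> ?D. fst z \<union> snd z = U} = (\<lambda>B. (B, U - B)) ` sub U k"
    proof (intro equalityI subsetI)
      fix z assume "z \<in> {z \<in> ?D. fst z \<union> snd z = U}"
      then obtain B T where zz: "z = (B, T)" and B: "B \<subseteq> R" "card B = k" and T: "T \<subseteq> R - B" "card T = j"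
        and BT: "B \<union> T = U" by (auto simp: sub_def)
      have "T = U - B" using T BT by auto
      moreover have "B \<in> sub U k" using B BT by (auto simp: sub_def)
      ultimately show "z \<in> (\<lambda>B. (B, U - B)) ` sub U k" using zz by auto
    next
      fix z assume "z \<in> (\<lambda>B. (B, U - B)) ` sub U k"
      then obtain B where zz: "z = (B, U - B)" and B: "B \<subseteq> U" "card B = k" by (auto simp: sub_def)
      have "card (U - B) = j" using B U' by (simp add: card_Diff_subset finite_subset)
      thus "z \<in> {z \<in> ?D. fst z \<union> snd z = U}" using zz B U' by (auto simp: sub_def)
    qed
    moreover have "card ((\<lambda>B. (B, U - B)) ` sub U k) = card (sub U k)"
      by (rule card_image) (auto simp: inj_on_def)
    ultimately show "card {z \<in> ?D. fst z \<union> snd z = U} = (k + j) choose k"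
      using U' by (simp add: card_sub)
  qed simp
  finally show ?thesis by simp
qed


definition II :: "(nat \<Rightarrow> 'x) pmf \<Rightarrow> nat \<Rightarrow> nat set \<Rightarrow> ennreal" where
  "II P i T = mutual_info_pmf P (\<lambda>s. s i) (proj T)"
definition JJ :: "(nat \<Rightarrow> 'x) pmf \<Rightarrow> nat \<Rightarrow> nat set \<Rightarrow> nat set \<Rightarrow> ennreal" where
  "JJ P i T B = condMI P (\<lambda>s. s i) (proj T) (proj B)"
definition FF :: "(nat \<Rightarrow> 'x) pmf \<Rightarrow> nat \<Rightarrow> nat \<Rightarrow> ennreal" where
  "FF P m t = avg {..<m} (\<lambda>i. avg (sub ({..<m} - {i}) t) (\<lambda>T. II P i T))"
definition GG :: "(nat \<Rightarrow> 'x) pmf \<Rightarrow> nat \<Rightarrow> nat \<Rightarrow> nat \<Rightarrow> ennreal" where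
  "GG P m j k = avg {..<m} (\<lambda>i. avg (sub ({..<m} - {i}) k) (\<lambda>B. avg (sub ({..<m} - {i} - B) j) (\<lambda>T. JJ P i T B)))"
definition PHI :: "(nat \<Rightarrow> 'x) pmf \<Rightarrow> nat \<Rightarrow> nat \<Rightarrow> nat \<Rightarrow> ennreal" where
  "PHI P m n k = avg (sub {..<m} n) (\<lambda>A. avg (sub ({..<m} - A) k) (\<lambda>B. cond_total_cor P A B))"

lemma FF_step:
  assumes "k + j + 1 \<le> m"
  shows "FF P m (k + j) = FF P m k + GG P m j k"
proof -
  have "FF P m (k + j) = avg {..<m} (\<lambda>i. avg (sub ({..<m} - {i}) k) (\<lambda>B. II P i B + avg (sub ({..<m} - {i} - B) j) (\<lambda>T. JJ P i T B)))"
    unfolding FF_def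
  proof (rule avg_cong)
    fix i assume i: "i \<in> {..<m}"
    have cR: "card ({..<m} - {i}) = m - 1" using i by simp
    have "avg (sub ({..<m} - {i}) (k + j)) (II P i) = avg (sub ({..<m} - {i}) k) (\<lambda>B. avg (sub ({..<m} - {i} - B) j) (\<lambda>T. II P i (B \<union> T)))"
      using assms cR by (intro comb_split) auto
    also have "\<dots> = avg (sub ({..<m} - {i}) k) (\<lambda>B. avg (sub ({..<m} - {i} - B) j) (\<lambda>T. II P i B + JJ P i T B))"
      by (simp add: II_def JJ_def MI_union)
    also have "\<dots> = avg (sub ({..<m} - {i}) k) (\<lambda>B. II P i B + avg (sub ({..<m} - {i} - B) j) (\<lambda>T. JJ P i T B))"
    proof (rule avg_cong)
      fix B assume B: "B \<in> sub ({..<m} - {i}) k"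
      hence "card ({..<m} - {i} - B) = m - 1 - k" using cR
        by (subst card_Diff_subset) (auto simp: sub_def intro: finite_subset)
      hence "sub ({..<m} - {i} - B) j \<noteq> {}" using assms by (intro sub_ne) auto
      thus "avg (sub ({..<m} - {i} - B) j) (\<lambda>T. II P i B + JJ P i T B) = II P i B + avg (sub ({..<m} - {i} - B) j) (\<lambda>T. JJ P i T B)"
        by (simp add: avg_add avg_const sub_finite)
    qed
    finally show "avg (sub ({..<m} - {i}) (k + j)) (II P i) = avg (sub ({..<m} - {i}) k) (\<lambda>B. II P i B + avg (sub ({..<m} - {i} - B) j) (\<lambda>T. JJ P i T B))" .
  qed
  also have "\<dots> = FF P m k + GG P m j k"
    unfolding FF_def GG_def by (simp add: avg_add)
  finally show ?thesis .
qed


lemma PHI_step: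
  assumes nk: "n + 1 + k \<le> m"
  shows "PHI P m (n + 1) k = PHI P m n k + GG P m n k"
proof -
  define M where "M = {..<m}"
  have fM: "finite M" and cM: "card M = m" by (simp_all add: M_def)
  define D1 where "D1 = Sigma (sub M (n+1)) (\<lambda>A. sub (M - A) k \<times> A)"
  define X where "X = (\<lambda>z::nat set \<times> nat set \<times> nat. cond_total_cor P (fst z - {snd (snd z)}) (fst (snd z)))"
  define Y where "Y = (\<lambda>z::nat set \<times> nat set \<times> nat. JJ P (snd (snd z)) (fst z - {snd (snd z)}) (fst (snd z)))"
  have subM: "\<And>A t. A \<in> sub M t \<Longrightarrow> A \<subseteq> M \<and> finite A \<and> card A = t"
    using fM by (auto simp: sub_def intro: finite_subset)
  have fD1: "finite D1" unfolding D1_def using fM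
    by (intro finite_SigmaI sub_finite) (auto dest: subM intro!: finite_cartesian_product sub_finite)
  have "PHI P m (n+1) k = avg (sub M (n+1)) (\<lambda>A. avg (sub (M - A) k) (\<lambda>B. avg A (\<lambda>a. X (A, B, a) + Y (A, B, a))))"
    unfolding PHI_def M_def[symmetric]
  proof (intro avg_cong)
    fix A B assume A: "A \<in> sub M (n+1)"
    then have fA: "finite A" "A \<noteq> {}" using subM[OF A] by auto
    have "avg A (\<lambda>a. X (A, B, a) + Y (A, B, a)) = avg A (\<lambda>a. cond_total_cor P A B)"
    proof (rule avg_cong)
      fix a assume a: "a \<in> A"
      have "cond_total_cor P A B = cond_total_cor P (insert a (A - {a})) B" using a by (simp add: insert_absorb)
      also have "\<dots> = X (A, B, a) + Y (A, B, a)"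
        unfolding X_def Y_def JJ_def using fA by (subst cond_total_cor_insert) auto
      finally show "X (A, B, a) + Y (A, B, a) = cond_total_cor P A B" by simp
    qed
    also have "\<dots> = cond_total_cor P A B" using fA by (simp add: avg_const)
    finally show "cond_total_cor P A B = avg A (\<lambda>a. X (A, B, a) + Y (A, B, a))" by simp
  qed
  also have "\<dots> = avg (sub M (n+1)) (\<lambda>A. avg (sub (M - A) k \<times> A) (\<lambda>w. X (A, fst w, snd w) + Y (A, fst w, snd w)))"
  proof (rule avg_cong)
    fix A assume A: "A \<in> sub M (n+1)"
    show "avg (sub (M - A) k) (\<lambda>B. avg A (\<lambda>a. X (A, B, a) + Y (A, B, a))) = avg (sub (M - A) k \<times> A) (\<lambda>w. X (A, fst w, snd w) + Y (A, fst w, snd w))"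
      using subM[OF A] fM by (intro avg_Sigma[where c="n+1"]) (auto intro: sub_finite)
  qed
  also have "\<dots> = avg D1 (\<lambda>z. X (fst z, fst (snd z), snd (snd z)) + Y (fst z, fst (snd z), snd (snd z)))"
    unfolding D1_def
  proof (rule avg_Sigma[where c = "((m - (n+1)) choose k) * (n+1)"])
    show "finite (sub M (n+1))" using fM by (rule sub_finite)
    fix A assume A: "A \<in> sub M (n+1)"
    have cMA: "card (M - A) = m - (n+1)" using subM[OF A] cM fM by (simp add: card_Diff_subset)
    show "finite (sub (M - A) k \<times> A)" using subM[OF A] fM by (auto intro: sub_finite)
    show "card (sub (M - A) k \<times> A) = ((m - (n+1)) choose k) * (n+1)"
      using subM[OF A] fM cMA by (simp add: card_cartesian_product card_sub)
  next
    have "0 < (m - (n+1)) choose k" using nk by (intro zero_less_binomial) auto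
    thus "0 < ((m - (n+1)) choose k) * (n+1)" by (intro mult_pos_pos) auto
  qed
  also have "\<dots> = avg D1 (\<lambda>z. X z + Y z)" by simp
  also have "\<dots> = avg D1 X + avg D1 Y" by (rule avg_add)
  also have "avg D1 X = PHI P m n k"
  proof -
    define E1 where "E1 = Sigma (sub M n) (\<lambda>A'. sub (M - A') k)"
    have "PHI P m n k = avg E1 (\<lambda>w. cond_total_cor P (fst w) (snd w))"
      unfolding PHI_def M_def[symmetric] E1_def
    proof (rule avg_Sigma[where c = "(m - n) choose k"])
      show "finite (sub M n)" using fM by (rule sub_finite)
      fix A assume A: "A \<in> sub M n"
      show "finite (sub (M - A) k)" using fM by (intro sub_finite) auto
      show "card (sub (M - A) k) = (m - n) choose k" using subM[OF A] cM fM by (simp add: card_sub card_Diff_subset)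
    next
      show "0 < (m - n) choose k" using nk by simp
    qed
    moreover have "avg D1 (\<lambda>z. (\<lambda>w. cond_total_cor P (fst w) (snd w)) ((\<lambda>z. (fst z - {snd (snd z)}, fst (snd z))) z)) = avg E1 (\<lambda>w. cond_total_cor P (fst w) (snd w))"
    proof (rule avg_fiber[where c = "m - n - k"])
      show "finite D1" by (rule fD1)
      show "finite E1" unfolding E1_def using fM by (intro finite_SigmaI sub_finite) auto
      fix z assume z: "z \<in> D1"
      then obtain A B a where zz: "z = (A, B, a)" and A: "A \<in> sub M (n+1)" and B: "B \<in> sub (M - A) k" and a: "a \<in> A"
        unfolding D1_def by auto
      have "card (A - {a}) = n" using subM[OF A] a by simp
      thus "(fst z - {snd (snd z)}, fst (snd z)) \<in> E1" using zz subM[OF A] B a unfolding E1_def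
        by (auto simp: sub_def)
    next
      fix w assume w: "w \<in> E1"
      then obtain A' B where ww: "w = (A', B)" and A': "A' \<in> sub M n" and B: "B \<in> sub (M - A') k"
        unfolding E1_def by auto
      have fA': "finite A'" "A' \<subseteq> M" "card A' = n" using subM[OF A'] by auto
      have B': "B \<subseteq> M - A'" "card B = k" using B by (auto simp: sub_def)
      have eq: "{z \<in> D1. (fst z - {snd (snd z)}, fst (snd z)) = w} = (\<lambda>a. (insert a A', B, a)) ` (M - A' - B)"
      proof (intro equalityI subsetI)
        fix z assume "z \<in> {z \<in> D1. (fst z - {snd (snd z)}, fst (snd z)) = w}"
        then obtain A B0 a where zz: "z = (A, B0, a)" and A: "A \<in> sub M (n+1)" and B0: "B0 \<in> sub (M - A) k" and a: "a \<in> A"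
          and e: "A - {a} = A'" "B0 = B" unfolding D1_def using ww by auto
        have "A = insert a A'" using e a by auto
        moreover have "a \<in> M - A' - B" using subM[OF A] a e B0 by (auto simp: sub_def)
        ultimately show "z \<in> (\<lambda>a. (insert a A', B, a)) ` (M - A' - B)" using zz e by auto
      next
        fix z assume "z \<in> (\<lambda>a. (insert a A', B, a)) ` (M - A' - B)"
        then obtain a where zz: "z = (insert a A', B, a)" and a: "a \<in> M" "a \<notin> A'" "a \<notin> B" by auto
        have "insert a A' \<in> sub M (n+1)" using fA' a by (auto simp: sub_def)
        moreover have "B \<in> sub (M - insert a A') k" using B' a by (auto simp: sub_def)
        ultimately show "z \<in> {z \<in> D1. (fst z - {snd (snd z)}, fst (snd z)) = w}"
          using zz ww a unfolding D1_def by auto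
      qed
      have "card (M - A' - B) = m - n - k"
      proof -
        have "M - A' - B = M - (A' \<union> B)" by auto
        moreover have "card (A' \<union> B) = n + k" using fA' B' fM
          by (subst card_Un_disjoint) (auto intro: finite_subset)
        moreover have "A' \<union> B \<subseteq> M" using fA' B' by auto
        moreover have "finite (A' \<union> B)" using fA' B' fM by (auto intro: finite_subset)
        ultimately show ?thesis using cM by (simp add: card_Diff_subset)
      qed
      moreover have "card ((\<lambda>a. (insert a A', B, a)) ` (M - A' - B)) = card (M - A' - B)"
        by (rule card_image) (auto simp: inj_on_def)
      ultimately show "card {z \<in> D1. (fst z - {snd (snd z)}, fst (snd z)) = w} = m - n - k" using eq by simp
    next
      show "0 < m - n - k" using nk by simp
    qed
    ultimately show ?thesis unfolding X_def by simp
  qed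
  also have "avg D1 Y = GG P m n k"
  proof -
    define E2 where "E2 = Sigma M (\<lambda>i. Sigma (sub (M - {i}) k) (\<lambda>B. sub (M - {i} - B) n))"
    have "GG P m n k = avg M (\<lambda>i. avg (Sigma (sub (M - {i}) k) (\<lambda>B. sub (M - {i} - B) n)) (\<lambda>w. JJ P i (snd w) (fst w)))"
      unfolding GG_def M_def[symmetric]
    proof (rule avg_cong)
      fix i assume i: "i \<in> M"
      have cMi: "card (M - {i}) = m - 1" using i cM fM by simp
      show "avg (sub (M - {i}) k) (\<lambda>B. avg (sub (M - {i} - B) n) (\<lambda>T. JJ P i T B)) = avg (Sigma (sub (M - {i}) k) (\<lambda>B. sub (M - {i} - B) n)) (\<lambda>w. JJ P i (snd w) (fst w))"
      proof (rule avg_Sigma[where c = "(m - 1 - k) choose n"])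
        show "finite (sub (M - {i}) k)" using fM by (intro sub_finite) auto
        fix B assume B: "B \<in> sub (M - {i}) k"
        show "finite (sub (M - {i} - B) n)" using fM by (intro sub_finite) auto
        show "card (sub (M - {i} - B) n) = (m - 1 - k) choose n"
          using B cMi fM by (subst card_sub) (auto simp: sub_def card_Diff_subset finite_subset)
      next
        show "0 < (m - 1 - k) choose n" using nk by simp
      qed
    qed
    also have "\<dots> = avg E2 (\<lambda>w. JJ P (fst w) (snd (snd w)) (fst (snd w)))"
      unfolding E2_def
    proof (rule avg_Sigma[where c = "((m - 1) choose k) * ((m - 1 - k) choose n)"])
      show "finite M" by (rule fM)
      fix i assume i: "i \<in> M"
      have cMi: "card (M - {i}) = m - 1" using i cM fM by simp
      show "finite (Sigma (sub (M - {i}) k) (\<lambda>B. sub (M - {i} - B) n))" using fM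
        by (intro finite_SigmaI sub_finite) auto
      have "card (Sigma (sub (M - {i}) k) (\<lambda>B. sub (M - {i} - B) n)) = (\<Sum>B\<in>sub (M - {i}) k. card (sub (M - {i} - B) n))"
        using fM by (intro card_SigmaI) (auto intro: sub_finite)
      also have "\<dots> = (\<Sum>B\<in>sub (M - {i}) k. (m - 1 - k) choose n)"
      proof (rule sum.cong[OF refl])
        fix B assume B: "B \<in> sub (M - {i}) k"
        show "card (sub (M - {i} - B) n) = (m - 1 - k) choose n"
          using B cMi fM by (subst card_sub) (auto simp: sub_def card_Diff_subset finite_subset)
      qed
      also have "\<dots> = ((m - 1) choose k) * ((m - 1 - k) choose n)"
        using cMi fM by (simp add: card_sub)
      finally show "card (Sigma (sub (M - {i}) k) (\<lambda>B. sub (M - {i} - B) n)) = ((m - 1) choose k) * ((m - 1 - k) choose n)" .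
    next
      have "0 < (m - 1) choose k" "0 < (m - 1 - k) choose n" using nk by (intro zero_less_binomial; auto)+
      thus "0 < ((m - 1) choose k) * ((m - 1 - k) choose n)" by (intro mult_pos_pos) auto
    qed
    also have "\<dots> = avg D1 (\<lambda>z. (\<lambda>w. JJ P (fst w) (snd (snd w)) (fst (snd w))) ((\<lambda>z. (snd (snd z), fst (snd z), fst z - {snd (snd z)})) z))"
    proof (rule avg_fiber[symmetric, where c = 1])
      show "finite D1" by (rule fD1)
      show "finite E2" unfolding E2_def using fM by (intro finite_SigmaI sub_finite) auto
      fix z assume z: "z \<in> D1"
      then obtain A B a where zz: "z = (A, B, a)" and A: "A \<in> sub M (n+1)" and B: "B \<in> sub (M - A) k" and a: "a \<in> A"
        unfolding D1_def by auto
      have "card (A - {a}) = n" using subM[OF A] a by simp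
      thus "(snd (snd z), fst (snd z), fst z - {snd (snd z)}) \<in> E2" using zz subM[OF A] B a unfolding E2_def
        by (auto simp: sub_def)
    next
      fix w assume w: "w \<in> E2"
      then obtain i B T where ww: "w = (i, B, T)" and i: "i \<in> M" and B: "B \<subseteq> M - {i}" "card B = k"
        and T: "T \<subseteq> M - {i} - B" "card T = n"
        unfolding E2_def by (auto simp: sub_def)
      have fT: "finite T" using T fM by (auto intro: finite_subset)
      have "{z \<in> D1. (snd (snd z), fst (snd z), fst z - {snd (snd z)}) = w} = {(insert i T, B, i)}"
      proof (intro equalityI subsetI)
        fix z assume "z \<in> {z \<in> D1. (snd (snd z), fst (snd z), fst z - {snd (snd z)}) = w}"
        then obtain A B0 a where zz: "z = (A, B0, a)" and a: "a \<in> A"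
          and e: "a = i" "B0 = B" "A - {a} = T" unfolding D1_def using ww by auto
        have "A = insert i T" using e a by auto
        thus "z \<in> {(insert i T, B, i)}" using zz e by auto
      next
        fix z assume "z \<in> {(insert i T, B, i)}"
        hence zz: "z = (insert i T, B, i)" by simp
        have iT: "i \<notin> T" using T by auto
        have "insert i T \<in> sub M (n+1)" using fT T i iT by (auto simp: sub_def)
        moreover have "B \<in> sub (M - insert i T) k" using B T by (auto simp: sub_def)
        moreover have "insert i T - {i} = T" using T by auto
        ultimately show "z \<in> {z \<in> D1. (snd (snd z), fst (snd z), fst z - {snd (snd z)}) = w}"
          using zz ww unfolding D1_def by auto
      qed
      thus "card {z \<in> D1. (snd (snd z), fst (snd z), fst z - {snd (snd z)}) = w} = 1" by simp
    qed simp
    finally show ?thesis unfolding Y_def by simp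
  qed
  finally show ?thesis .
qed


lemma gauss_real: "(\<Sum>j<n. real j) * 2 = real n * (real n - 1)"
  by (induct n) (auto simp: algebra_simps)

lemma real_core:
  fixes f :: "nat \<Rightarrow> real" and n K :: nat
  assumes n: "n \<ge> 1"
    and mono: "\<And>s t. s \<le> t \<Longrightarrow> t \<le> n + K - 1 \<Longrightarrow> f s \<le> f t"
    and nonneg: "\<And>t. t \<le> n + K - 1 \<Longrightarrow> f t \<ge> 0"
  shows "\<exists>k\<le>K. (\<Sum>j<n. f (k + j) - f k) \<le> real (n * (n - 1)) / (2 * (real K + 1)) * f (n + K - 1)"
proof (rule ccontr)
  define N where "N = n + K - 1"
  define c where "c = real (n * (n - 1)) / (2 * (real K + 1))"
  assume "\<not> ?thesis"
  note nt = this
  have gt: "c * f N < (\<Sum>j<n. f (k + j) - f k)" if "k \<in> {..<K+1}" for k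
  proof -
    have "k \<le> K" using that by auto
    hence "\<not> (\<Sum>j<n. f (k + j) - f k) \<le> c * f N" using nt unfolding c_def N_def by blast
    thus ?thesis by simp
  qed
  have tel: "(\<Sum>k<K+1. f (k + j) - f k) = (\<Sum>l<j. f (l + K + 1) - f l)" for j
  proof -
    have "(\<Sum>k<K+1. f (k + j) - f k) = (\<Sum>k<K+1. \<Sum>l<j. f (k + Suc l) - f (k + l))"
      by (intro sum.cong refl) (subst sum_lessThan_telescope[where f = "\<lambda>l. f (_ + l)"], simp)
    also have "\<dots> = (\<Sum>l<j. \<Sum>k<K+1. f (l + Suc k) - f (l + k))"
      by (subst sum.swap) (simp add: add_ac)
    also have "\<dots> = (\<Sum>l<j. f (l + K + 1) - f l)"
      by (intro sum.cong refl) (subst sum_lessThan_telescope[where f = "\<lambda>k. f (_ + k)"], simp)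
    finally show ?thesis .
  qed
  have bnd: "(\<Sum>l<j. f (l + K + 1) - f l) \<le> real j * f N" if j: "j < n" for j
  proof -
    have "(\<Sum>l<j. f (l + K + 1) - f l) \<le> (\<Sum>l<j. f N)"
    proof (rule sum_mono)
      fix l assume l: "l \<in> {..<j}"
      have "f (l + K + 1) \<le> f N" using l j unfolding N_def by (intro mono) auto
      moreover have "f l \<ge> 0" using l j by (intro nonneg) auto
      ultimately show "f (l + K + 1) - f l \<le> f N" by simp
    qed
    thus ?thesis by simp
  qed
  have "(\<Sum>k<K+1. \<Sum>j<n. f (k + j) - f k) = (\<Sum>j<n. \<Sum>k<K+1. f (k + j) - f k)"
    by (rule sum.swap)
  also have "\<dots> \<le> (\<Sum>j<n. real j * f N)"
    using tel bnd by (intro sum_mono) auto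
  also have "\<dots> = (\<Sum>j<n. real j) * f N" by (simp add: sum_distrib_right)
  also have "\<dots> = (real (K+1) * c) * f N"
  proof -
    have "real (n * (n - 1)) = real n * (real n - 1)" using n by (simp add: of_nat_diff)
    hence e1: "(\<Sum>j<n. real j) = real (n * (n - 1)) / 2" using gauss_real[of n] by linarith
    have e2: "real (K+1) * c = real (n * (n - 1)) / 2" unfolding c_def by (simp add: field_simps)
    show ?thesis by (simp only: e1 e2)
  qed
  also have "\<dots> = (\<Sum>k<K+1. c * f N)" by simp
  also have "\<dots> < (\<Sum>k<K+1. \<Sum>j<n. f (k + j) - f k)"
    using gt by (intro sum_strict_mono) auto
  finally show False by simp
qed


lemma PHI_zero: "PHI P m 0 k = 0"
proof -
  have "PHI P m 0 k = avg (sub {..<m} 0) (\<lambda>A. avg (sub ({..<m} - A) k) (\<lambda>B. 0))"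
    unfolding PHI_def
  proof (intro avg_cong)
    fix A B assume "A \<in> sub {..<m} 0"
    hence "A \<subseteq> {..<m}" "card A = 0" by (auto simp: sub_def)
    hence "A = {}" using finite_subset[of A "{..<m}"] by auto
    thus "cond_total_cor P A B = 0" by (simp add: cond_total_cor_empty)
  qed
  thus ?thesis by (simp add: avg_zero)
qed

lemma GG_zero: "GG P m 0 k = 0"
proof -
  have "GG P m 0 k = avg {..<m} (\<lambda>i. avg (sub ({..<m} - {i}) k) (\<lambda>B. avg (sub ({..<m} - {i} - B) 0) (\<lambda>T. 0)))"
    unfolding GG_def
  proof (intro avg_cong)
    fix i B T assume "T \<in> sub ({..<m} - {i} - B) 0"
    hence "T \<subseteq> {..<m}" "card T = 0" by (auto simp: sub_def)
    hence "T = {}" using finite_subset[of T "{..<m}"] by auto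
    thus "JJ P i T B = 0" by (simp add: JJ_def condMI_empty)
  qed
  thus ?thesis by (simp add: avg_zero)
qed

lemma FF_mono: "s \<le> t \<Longrightarrow> t + 1 \<le> m \<Longrightarrow> FF P m s \<le> FF P m t"
  using FF_step[of s "t - s" m P] by simp

theorem mainTheorem4:
  fixes P :: "(nat \<Rightarrow> 'x::countable) pmf" and m n kmax :: nat
  assumes "n \<ge> 1" and "n + kmax \<le> m"
  shows "\<exists>k. k \<le> kmax \<and>
    avg {A. A \<subseteq> {..<m} \<and> card A = n}
      (\<lambda>A. avg {B. B \<subseteq> {..<m} - A \<and> card B = k} (\<lambda>B. cond_total_cor P A B))
    \<le> ennreal (real (n * (n - 1)) / (2 * (real kmax + 1))) *
      avg {..<m} (\<lambda>i. avg {B'. B' \<subseteq> {..<m} - {i} \<and> card B' = n + kmax - 1}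
                        (\<lambda>B'. mutual_info_pmf P (\<lambda>s. s i) (proj B')))"
proof -
  define K where "K = kmax"
  define N where "N = n + K - 1"
  define c where "c = real (n * (n - 1)) / (2 * (real K + 1))"
  have n1: "n \<ge> 1" and nK: "n + K \<le> m" using assms by (auto simp: K_def)
  have Nm: "N + 1 \<le> m" using n1 nK by (simp add: N_def)
  have LHS: "\<And>k. avg {A. A \<subseteq> {..<m} \<and> card A = n} (\<lambda>A. avg {B. B \<subseteq> {..<m} - A \<and> card B = k} (\<lambda>B. cond_total_cor P A B)) = PHI P m n k"
    by (simp add: PHI_def sub_def)
  have RHS: "avg {..<m} (\<lambda>i. avg {B'. B' \<subseteq> {..<m} - {i} \<and> card B' = n + kmax - 1} (\<lambda>B'. mutual_info_pmf P (\<lambda>s. s i) (proj B'))) = FF P m N"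
    by (simp add: FF_def sub_def II_def N_def K_def)
  have "\<exists>k\<le>K. PHI P m n k \<le> ennreal c * FF P m N"
  proof (cases "FF P m N = \<top>")
    case True
    show ?thesis
    proof (cases "n = 1")
      case True
      have "PHI P m n 0 = 0" using PHI_step[of 0 0 m P] nK True by (simp add: PHI_zero GG_zero)
      thus ?thesis by (intro exI[of _ 0]) auto
    next
      case False
      hence "c > 0" using n1 unfolding c_def by (intro divide_pos_pos) auto
      hence "ennreal c * FF P m N = \<top>" using True by (simp add: ennreal_mult_top)
      thus ?thesis by (intro exI[of _ 0]) auto
    qed
  next
    case False
    define f where "f t = enn2real (FF P m t)" for t
    have fin: "FF P m t < \<top>" if "t \<le> N" for t
    proof -
      have "FF P m t \<le> FF P m N" using FF_mono[of t N m P] that Nm by simp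
      moreover have "FF P m N < \<top>" using False by (simp add: less_top)
      ultimately show ?thesis by (rule le_less_trans)
    qed
    have FFf: "FF P m t = ennreal (f t)" if "t \<le> N" for t
      using fin[OF that] unfolding f_def by (simp add: less_top)
    have fmono: "f s \<le> f t" if "s \<le> t" "t \<le> N" for s t
      unfolding f_def using FF_mono[of s t m P] that Nm fin[of t] by (intro enn2real_mono) auto
    have fnn: "f t \<ge> 0" for t unfolding f_def by simp
    have GGf: "GG P m j k = ennreal (f (k + j) - f k)" if "k + j \<le> N" for j k
    proof -
      have e: "FF P m (k + j) = FF P m k + GG P m j k" using FF_step[of k j m P] that Nm by simp
      have "GG P m j k \<le> FF P m (k + j)" using e by simp
      hence "GG P m j k < \<top>" using fin[OF that] by (rule le_less_trans)
      then obtain g where g: "GG P m j k = ennreal g" "g \<ge> 0" by (cases "GG P m j k") auto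
      have "ennreal (f (k + j)) = ennreal (f k + g)" using e g FFf that fnn[of k] by simp
      hence "f (k + j) = f k + g" using g fnn by (subst (asm) ennreal_inj) (auto intro: add_nonneg_nonneg)
      thus ?thesis using g by simp
    qed
    have PHIf: "PHI P m n' k = ennreal (\<Sum>j<n'. f (k + j) - f k)" if "k \<le> K" "n' \<le> n" for n' k
      using that(2)
    proof (induct n')
      case 0 then show ?case by (simp add: PHI_zero)
    next
      case (Suc n')
      have "PHI P m (Suc n') k = PHI P m n' k + GG P m n' k"
        using PHI_step[of n' k m P] Suc.prems that nK by simp
      also have "\<dots> = ennreal (\<Sum>j<n'. f (k + j) - f k) + ennreal (f (k + n') - f k)"
        using Suc that by (simp add: GGf N_def)
      also have "\<dots> = ennreal ((\<Sum>j<n'. f (k + j) - f k) + (f (k + n') - f k))"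
      proof (rule ennreal_plus[symmetric])
        show "0 \<le> (\<Sum>j<n'. f (k + j) - f k)"
          using Suc that by (intro sum_nonneg) (auto intro!: fmono simp: N_def)
        show "0 \<le> f (k + n') - f k" using Suc that by (auto intro!: fmono simp: N_def)
      qed
      finally show ?case by simp
    qed
    obtain k where k: "k \<le> K" and phi: "(\<Sum>j<n. f (k + j) - f k) \<le> c * f N"
      using real_core[where f=f and n=n and K=K] n1 fmono fnn unfolding c_def N_def by blast
    have "PHI P m n k = ennreal (\<Sum>j<n. f (k + j) - f k)" using PHIf k by simp
    also have "\<dots> \<le> ennreal (c * f N)" using phi by (rule ennreal_leI)
    also have "\<dots> = ennreal c * FF P m N"
    proof -
      have "c \<ge> 0" unfolding c_def by simp
      thus ?thesis using FFf[of N] fnn[of N] by (simp add: ennreal_mult)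
    qed
    finally show ?thesis using k by blast
  qed
  thus ?thesis unfolding LHS RHS c_def K_def by blast
qed

end
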